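(* In the allocation problem and Synchronized Greedy (SG) mechanism described in the context, suppose all $r_i$ are equal. Let $a^\pi$ be the SG allocation under truthful bids. Then for all agents $i,i'$ and all $k=1,\ldots,m$, \[\sum_{\ell=1}^k a^\pi_{i\pi_i(\ell)}\ \ge\ \sum_{\ell=1}^k a^\pi_{i'\pi_i(\ell)},\] i.e., every agent weakly majorization-prefers its own share to that of any other agent.
   Context: There are $m$ distinct divisible goods; good $j$ is available in amount $q_j>0$. There are $n$ agents; agent $i$ is to receive a total of $r_i>0$, with $\sum_j q_j=\sum_i r_i$. An allocation is a family $a_{ij}\ge 0$ with $\sum_j a_{ij}=r_i$ and $\sum_i a_{ij}=q_j$. Each agent $i$ has a true preference list $\pi_i$, a permutation of the goods ($\pi_i(1)$ most preferred); $\pi=(\pi_1,\ldots,\pi_n)$. The SG mechanism: each agent $i$ bids a permutation $\sigma_i$ of the goods; over time $t\in[0,1]$ each agent $i$ receives, at rate $r_i$, the good highest in $\sigma_i$ among those not yet exhausted (a good is exhausted when the total amount handed out equals $q_j$; several agents may receive a good simultaneously; upon exhaustion, agents receiving it switch instantly to their next non-exhausted good). $a^\pi_{ij}$ is the total amount of good $j$ agent $i$ receives when every agent $i$ bids $\pi_i$. *)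

theory Defs
  imports Main "HOL.Real"
begin

text \<open>Goods are 0..<m, agents are 0..<n. A bid/preference of agent i is a function
  sigma i :: nat => nat, with sigma i 0 the most preferred good (0-indexed),
  assumed to be a bijection of {..<m}.  A state of the SG process is a pair
  (rem, al): remaining amount of each good, and amount handed out so far.\<close>

definition sg_eat :: "nat \<Rightarrow> (nat \<Rightarrow> nat \<Rightarrow> nat) \<Rightarrow> (nat \<Rightarrow> real) \<Rightarrow> nat \<Rightarrow> nat" where
  "sg_eat m \<sigma> rem i = \<sigma> i (LEAST l. l < m \<and> rem (\<sigma> i l) > 0)"

definition sg_rate :: "nat \<Rightarrow> nat \<Rightarrow> (nat \<Rightarrow> real) \<Rightarrow> (nat \<Rightarrow> nat \<Rightarrow> nat)
    \<Rightarrow> (nat \<Rightarrow> real) \<Rightarrow> nat \<Rightarrow> real" where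
  "sg_rate n m r \<sigma> rem j = (\<Sum>i\<in>{i. i < n \<and> sg_eat m \<sigma> rem i = j}. r i)"

text \<open>One phase of SG: all agents eat their top non-exhausted good at rate r i until
  the first of the currently eaten goods gets exhausted (after duration d).\<close>

definition sg_step :: "nat \<Rightarrow> nat \<Rightarrow> (nat \<Rightarrow> real) \<Rightarrow> (nat \<Rightarrow> nat \<Rightarrow> nat)
    \<Rightarrow> (nat \<Rightarrow> real) \<times> (nat \<Rightarrow> nat \<Rightarrow> real) \<Rightarrow> (nat \<Rightarrow> real) \<times> (nat \<Rightarrow> nat \<Rightarrow> real)" where
  "sg_step n m r \<sigma> st =
     (let rem = fst st; al = snd st in
      if \<exists>j<m. rem j > 0 then
        (let e = sg_eat m \<sigma> rem;
             rate = sg_rate n m r \<sigma> rem;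
             d = Min {rem j / rate j | j. j < m \<and> rate j > 0}
         in (\<lambda>j. rem j - rate j * d,
             \<lambda>i j. al i j + (if i < n \<and> e i = j then r i * d else 0)))
      else st)"

text \<open>Each phase exhausts at least one good, so after m phases all goods are exhausted
  (further phases would not change anything).  sg_alloc gives a_{ij}.\<close>

definition sg_alloc :: "nat \<Rightarrow> nat \<Rightarrow> (nat \<Rightarrow> real) \<Rightarrow> (nat \<Rightarrow> real) \<Rightarrow> (nat \<Rightarrow> nat \<Rightarrow> nat)
    \<Rightarrow> nat \<Rightarrow> nat \<Rightarrow> real" where
  "sg_alloc n m q r \<sigma> = snd ((sg_step n m r \<sigma> ^^ m) (q, \<lambda>i j. 0))"

end

theory Submission
  imports Defs
begin

lemma sum_ind_image:
  fixes k :: nat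
  assumes "inj_on f {..<k}"
  shows "(\<Sum>l<k. if x = f l then c else 0) = (if x \<in> f ` {..<k} then c else (0::real))"
proof -
  have "(\<Sum>l<k. if x = f l then c else 0) = (\<Sum>y\<in>f ` {..<k}. if x = y then c else 0)"
    using sum.reindex[OF assms, of "\<lambda>y. if x = y then c else 0"] by simp
  also have "\<dots> = (if x \<in> f ` {..<k} then c else 0)"
    by (simp only: sum.delta'[OF finite_imageI[OF finite_lessThan]])
  finally show ?thesis .
qed

lemma step_inv:
  fixes n m :: nat and r :: "nat \<Rightarrow> real" and \<pi> :: "nat \<Rightarrow> nat \<Rightarrow> nat"
  assumes r_pos: "\<And>i. i < n \<Longrightarrow> r i > 0"
    and r_equal: "r i = r i'"
    and perm: "\<And>i. i < n \<Longrightarrow> bij_betw (\<pi> i) {..<m} {..<m}"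
    and i: "i < n" and i': "i' < n"
    and k: "k \<le> m"
    and nonneg: "\<forall>j<m. fst st j \<ge> 0"
    and ineq: "(\<Sum>l<k. snd st i (\<pi> i l)) \<ge> (\<Sum>l<k. snd st i' (\<pi> i l))"
  shows "(\<forall>j<m. fst (sg_step n m r \<pi> st) j \<ge> 0) \<and>
     (\<Sum>l<k. snd (sg_step n m r \<pi> st) i (\<pi> i l)) \<ge> (\<Sum>l<k. snd (sg_step n m r \<pi> st) i' (\<pi> i l))"
proof (cases "\<exists>j<m. fst st j > 0")
  case False
  have "sg_step n m r \<pi> st = st" unfolding sg_step_def Let_def using False by (subst if_not_P) auto
  then show ?thesis using nonneg ineq by simp
next
  case True
  define rem where "rem = fst st"
  define al where "al = snd st"
  define e where "e = sg_eat m \<pi> rem"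
  define rate where "rate = sg_rate n m r \<pi> rem"
  define D where "D = {rem j / rate j | j. j < m \<and> rate j > 0}"
  define d where "d = Min D"
  have st_eq: "sg_step n m r \<pi> st = (\<lambda>j. rem j - rate j * d,
             \<lambda>x j. al x j + (if x < n \<and> e x = j then r x * d else 0))"
    using True unfolding sg_step_def Let_def rem_def al_def e_def rate_def d_def D_def by simp
  obtain j0 where j0: "j0 < m" "rem j0 > 0" using True rem_def by auto
  have ex_l: "\<exists>l. l < m \<and> rem (\<pi> x l) > 0" if "x < n" for x
  proof -
    have "j0 \<in> \<pi> x ` {..<m}" using bij_betw_imp_surj_on[OF perm[OF that]] j0 by auto
    then show ?thesis using j0 by auto
  qed
  have eL: "(LEAST l. l < m \<and> rem (\<pi> x l) > 0) < m \<and> rem (\<pi> x (LEAST l. l < m \<and> rem (\<pi> x l) > 0)) > 0"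
    if "x < n" for x
    using LeastI_ex[OF ex_l[OF that]] .
  have e_def2: "e x = \<pi> x (LEAST l. l < m \<and> rem (\<pi> x l) > 0)" for x
    unfolding e_def sg_eat_def by simp
  have e_lt: "e x < m" if "x < n" for x
    using eL[OF that] bij_betwE[OF perm[OF that]] e_def2 by auto
  have e_pos: "rem (e x) > 0" if "x < n" for x using eL[OF that] e_def2 by simp
  have fin: "finite {x. x < n \<and> e x = j}" for j by simp
  have rate_nn: "rate j \<ge> 0" for j
    unfolding rate_def sg_rate_def e_def[symmetric]
    by (rule sum_nonneg) (use r_pos in \<open>fastforce intro: less_imp_le\<close>)
  have rate_pos: "rate (e i) > 0"
  proof -
    have "r i \<le> (\<Sum>x\<in>{x. x < n \<and> e x = e i}. r x)"
      by (rule member_le_sum) (use i r_pos in \<open>auto intro: less_imp_le\<close>)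
    then show ?thesis using r_pos[OF i] unfolding rate_def sg_rate_def e_def by simp
  qed
  have Dfin: "finite D" unfolding D_def by simp
  have Dne: "D \<noteq> {}" unfolding D_def using rate_pos e_lt[OF i] by auto
  have d_nn: "d \<ge> 0"
    unfolding d_def using Min_ge_iff[OF Dfin Dne] unfolding D_def
    using nonneg rem_def rate_nn by auto
  have rem_nn: "\<forall>j<m. rem j - rate j * d \<ge> 0"
  proof (intro allI impI)
    fix j assume j: "j < m"
    show "rem j - rate j * d \<ge> 0"
    proof (cases "rate j > 0")
      case True
      have "d \<le> rem j / rate j" unfolding d_def
        by (rule Min_le[OF Dfin]) (use j True D_def in auto)
      then have "rate j * d \<le> rem j" using True by (simp add: field_simps)
      then show ?thesis by simp
    next
      case False
      then have "rate j = 0" using rate_nn[of j] by simp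
      then show ?thesis using nonneg j rem_def by simp
    qed
  qed
  have inj: "inj_on (\<pi> i) {..<k}"
    using bij_betw_imp_inj_on[OF perm[OF i]] k by (auto intro: inj_on_subset)
  have incr: "(\<Sum>l<k. al x (\<pi> i l) + (if x < n \<and> e x = \<pi> i l then r x * d else 0))
     = (\<Sum>l<k. al x (\<pi> i l)) + (if e x \<in> \<pi> i ` {..<k} then r x * d else 0)" if "x < n" for x
    using that sum_ind_image[OF inj, of "e x" "r x * d"] by (simp add: sum.distrib)
  have key: "e i' \<in> \<pi> i ` {..<k} \<Longrightarrow> e i \<in> \<pi> i ` {..<k}"
  proof -
    assume "e i' \<in> \<pi> i ` {..<k}"
    then obtain l0 where l0: "l0 < k" "e i' = \<pi> i l0" by auto
    have "rem (\<pi> i l0) > 0" using e_pos[OF i'] l0 by simp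
    then have "(LEAST l. l < m \<and> rem (\<pi> i l) > 0) \<le> l0"
      using l0 k by (intro Least_le) simp
    then show "e i \<in> \<pi> i ` {..<k}" using l0 e_def2 by auto
  qed
  have rd: "0 \<le> r i' * d" using d_nn r_pos[OF i'] by simp
  have "(\<Sum>l<k. al i' (\<pi> i l)) + (if e i' \<in> \<pi> i ` {..<k} then r i' * d else 0)
      \<le> (\<Sum>l<k. al i (\<pi> i l)) + (if e i \<in> \<pi> i ` {..<k} then r i * d else 0)"
  proof -
    let ?A = "\<Sum>l<k. al i' (\<pi> i l)" and ?B = "\<Sum>l<k. al i (\<pi> i l)"
    have AB: "?A \<le> ?B" using ineq al_def by simp
    show ?thesis
    proof (cases "e i \<in> \<pi> i ` {..<k}")
      case True
      then show ?thesis using AB rd r_equal by (cases "e i' \<in> \<pi> i ` {..<k}") auto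
    next
      case False
      then show ?thesis using AB key by auto
    qed
  qed
  then show ?thesis
    using rem_nn incr[OF i] incr[OF i'] by (simp add: st_eq)
qed

theorem theorem4:
  fixes n m :: nat and q r :: "nat \<Rightarrow> real" and \<pi> :: "nat \<Rightarrow> nat \<Rightarrow> nat"
  assumes q_pos: "\<And>j. j < m \<Longrightarrow> q j > 0"
    and r_pos: "\<And>i. i < n \<Longrightarrow> r i > 0"
    and balance: "(\<Sum>j<m. q j) = (\<Sum>i<n. r i)"
    and r_equal: "\<And>i i'. i < n \<Longrightarrow> i' < n \<Longrightarrow> r i = r i'"
    and perm: "\<And>i. i < n \<Longrightarrow> bij_betw (\<pi> i) {..<m} {..<m}"
    and i: "i < n" and i': "i' < n"
    and k: "1 \<le> k" "k \<le> m"
  shows "(\<Sum>l<k. sg_alloc n m q r \<pi> i (\<pi> i l)) \<ge> (\<Sum>l<k. sg_alloc n m q r \<pi> i' (\<pi> i l))"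
proof -
  have "\<And>t. (\<forall>j<m. fst ((sg_step n m r \<pi> ^^ t) (q, \<lambda>i j. 0)) j \<ge> 0) \<and>
     (\<Sum>l<k. snd ((sg_step n m r \<pi> ^^ t) (q, \<lambda>i j. 0)) i (\<pi> i l))
       \<ge> (\<Sum>l<k. snd ((sg_step n m r \<pi> ^^ t) (q, \<lambda>i j. 0)) i' (\<pi> i l))"
  proof -
    fix t show "?thesis t"
    proof (induction t)
      case 0
      then show ?case using q_pos by (auto intro: less_imp_le)
    next
      case (Suc t)
      show ?case
        using step_inv[where \<pi>=\<pi> and st="(sg_step n m r \<pi> ^^ t) (q, \<lambda>i j. 0)" and k=k,
            OF r_pos r_equal[OF i i'] perm i i' k(2)] Suc by simp
    qed
  qed
  then show ?thesis unfolding sg_alloc_def by blast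
qed

end
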